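(* Let $\mathcal D=(C_1,C_2,C_3,C_4)$ be an ordered $4$-tuple of oriented circles in $\mathbb R^2$ (oriented lines allowed), and let $\mathbf M_{\mathcal D}$ be the real $4\times 3$ matrix whose $i$-th row is the curvature-center coordinate vector $\mathbf m(C_i)$. If $\mathcal D$ is an ordered, oriented Descartes configuration, then the first column of $\mathbf M=\mathbf M_{\mathcal D}$ is nonzero and $$\mathbf M^T\mathbf Q_D\mathbf M=\begin{pmatrix}0&0&0\\0&2&0\\0&0&2\end{pmatrix}.$$ Conversely, every real $4\times3$ matrix $\mathbf M$ with nonzero first column satisfying this equation equals $\mathbf M_{\mathcal D}$ for a unique ordered, oriented Descartes configuration $\mathcal D$.
   Context: An oriented circle is a circle together with a choice of unit normal pointing inward or outward. If it has radius $r$, its oriented curvature is $b=1/r$ for an inward normal and $b=-1/r$ for an outward normal; its interior is the open disk it bounds for an inward normal and the open exterior of that disk for an outward normal. A line is regarded as a circle of curvature $0$; an oriented line is a line with a chosen unit normal $\mathbf h=(h_1,h_2)$, and its interior is the open half-plane into which $\mathbf h$ points. A Descartes configuration is a set of four mutually tangent circles (lines allowed; two parallel lines count as tangent at $\infty$) with six distinct points of tangency. An oriented Descartes configuration is a Descartes configuration whose circles are oriented so that either the four interiors are pairwise disjoint, or they become pairwise disjoint after reversing all four orientations. Curvature-center coordinates: for an oriented circle with center $(x,y)$ and oriented curvature $b\neq0$, $\mathbf m(C)=(b,bx,by)$; for an oriented line with unit normal $\mathbf h$, $\mathbf m(C)=(0,h_1,h_2)$. The Descartes matrix is $\mathbf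 Q_D=\mathbf I-\tfrac12\mathbf 1\mathbf 1^T$, i.e. the $4\times4$ matrix with diagonal entries $1/2$ and off-diagonal entries $-1/2$. *)

theory Defs
  imports "HOL-Analysis.Analysis"
begin

text \<open>An oriented circle is either a proper circle with centre, radius and an
  orientation flag (True = inward normal), or an oriented line
  {p. h \<bullet> p = d} with unit normal h, whose interior is {p. h \<bullet> p > d}.\<close>

datatype ocircle =
    OCircle "real \<times> real" real bool
  | OLine "real \<times> real" real

fun valid_oc :: "ocircle \<Rightarrow> bool" where
  "valid_oc (OCircle c r inw) = (r > 0)"
| "valid_oc (OLine h d) = ((fst h)\<^sup>2 + (snd h)\<^sup>2 = 1)"

fun is_line :: "ocircle \<Rightarrow> bool" where
  "is_line (OCircle c r inw) = False"
| "is_line (OLine h d) = True"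

fun pts :: "ocircle \<Rightarrow> (real \<times> real) set" where
  "pts (OCircle c r inw) = {p. dist p c = r}"
| "pts (OLine h d) = {p. fst h * fst p + snd h * snd p = d}"

text \<open>Point set in the extended plane R^2 \<union> {\<infinity>}; None stands for \<infinity>,
  which lies on every line.\<close>
definition ext_pts :: "ocircle \<Rightarrow> (real \<times> real) option set" where
  "ext_pts C = Some ` pts C \<union> (if is_line C then {None} else {})"

definition tangent :: "ocircle \<Rightarrow> ocircle \<Rightarrow> bool" where
  "tangent C D \<longleftrightarrow> (\<exists>!q. q \<in> ext_pts C \<inter> ext_pts D)"

definition tangency_point :: "ocircle \<Rightarrow> ocircle \<Rightarrow> (real \<times> real) option" where
  "tangency_point C D = (THE q. q \<in> ext_pts C \<inter> ext_pts D)"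

fun ointerior :: "ocircle \<Rightarrow> (real \<times> real) set" where
  "ointerior (OCircle c r inw) = (if inw then {p. dist p c < r} else {p. dist p c > r})"
| "ointerior (OLine h d) = {p. fst h * fst p + snd h * snd p > d}"

fun reverse_oc :: "ocircle \<Rightarrow> ocircle" where
  "reverse_oc (OCircle c r inw) = OCircle c r (\<not> inw)"
| "reverse_oc (OLine h d) = OLine (- h) (- d)"

fun ocurv :: "ocircle \<Rightarrow> real" where
  "ocurv (OCircle c r inw) = (if inw then 1 / r else - 1 / r)"
| "ocurv (OLine h d) = 0"

fun mvec :: "ocircle \<Rightarrow> real ^ 3" where
  "mvec (OCircle c r inw) =
     (let b = (if inw then 1 / r else - 1 / r) in vector [b, b * fst c, b * snd c])"
| "mvec (OLine h d) = vector [0, fst h, snd h]"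

type_synonym config = "ocircle \<times> ocircle \<times> ocircle \<times> ocircle"

fun clist :: "config \<Rightarrow> ocircle list" where
  "clist (C1, C2, C3, C4) = [C1, C2, C3, C4]"

definition descartes_config :: "config \<Rightarrow> bool" where
  "descartes_config D \<longleftrightarrow>
     (let L = clist D in
       (\<forall>i<4. valid_oc (L ! i)) \<and>
       (\<forall>i<4. \<forall>j<4. i \<noteq> j \<longrightarrow> tangent (L ! i) (L ! j)) \<and>
       inj_on (\<lambda>(i, j). tangency_point (L ! i) (L ! j)) {(i, j). i < j \<and> j < (4::nat)})"

definition oriented_descartes :: "config \<Rightarrow> bool" where
  "oriented_descartes D \<longleftrightarrow>
     descartes_config D \<and>
     (let L = clist D in
       (\<forall>i<4. \<forall>j<4. i \<noteq> j \<longrightarrow> ointerior (L ! i) \<inter> ointerior (L ! j) = {}) \<or>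
       (\<forall>i<4. \<forall>j<4. i \<noteq> j \<longrightarrow>
          ointerior (reverse_oc (L ! i)) \<inter> ointerior (reverse_oc (L ! j)) = {}))"

fun MD :: "config \<Rightarrow> real ^ 3 ^ 4" where
  "MD (C1, C2, C3, C4) = vector [mvec C1, mvec C2, mvec C3, mvec C4]"

definition QD :: "real ^ 4 ^ 4" where
  "QD = (\<chi> i j. if i = j then 1 / 2 else - 1 / 2)"

definition target3 :: "real ^ 3 ^ 3" where
  "target3 = vector [vector [0, 0, 0], vector [0, 2, 0], vector [0, 0, 2]]"

end

theory Submission
  imports Defs
begin

lemma vector_4 [simp]:
 "(vector [x,y,z,w] ::('a::zero)^4)$1 = x"
 "(vector [x,y,z,w] ::('a::zero)^4)$2 = y"
 "(vector [x,y,z,w] ::('a::zero)^4)$3 = z"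
 "(vector [x,y,z,w] ::('a::zero)^4)$4 = w"
  unfolding vector_def by simp_all

definition lor :: "real^4 \<Rightarrow> real^4 \<Rightarrow> real" where
  "lor u v = u$3 * v$3 + u$4 * v$4 - (u$1 * v$2 + u$2 * v$1)/2"

definition phi :: "real^4 \<Rightarrow> real \<times> real \<Rightarrow> real" where
  "phi w p = w$1 - 2 * (w$3 * fst p + w$4 * snd p) + w$2 * ((fst p)^2 + (snd p)^2)"

fun aug :: "ocircle \<Rightarrow> real^4" where
  "aug (OCircle c r inw) = (let b = (if inw then 1 / r else - 1 / r) in
      vector [b * ((fst c)^2 + (snd c)^2) - 1/b, b, b * fst c, b * snd c])"
| "aug (OLine h d) = vector [2 * d, 0, fst h, snd h]"

lemma dist_sq: "dist p (c::real\<times>real) = sqrt ((fst p - fst c)^2 + (snd p - snd c)^2)"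
  by (simp add: dist_prod_def dist_real_def)

lemma phi_circle:
  assumes "r > 0"
  shows "phi (aug (OCircle c r inw)) p = (if inw then 1 else -1) * (((fst p - fst c)^2 + (snd p - snd c)^2)/r - r)"
  using assms by (auto simp: phi_def Let_def field_simps power2_eq_square)

lemma sqrt_eq_pos: "r > 0 \<Longrightarrow> S \<ge> 0 \<Longrightarrow> (sqrt S = r) = (S = r^2)"
  by auto

lemma sqrt_less_pos: "r > 0 \<Longrightarrow> S \<ge> 0 \<Longrightarrow> (sqrt S < r) = (S < r^2)"
  by (metis real_less_rsqrt real_sqrt_less_iff real_sqrt_pow2 real_sqrt_power abs_of_pos real_sqrt_abs)

lemma sqrt_gt_pos: "r > 0 \<Longrightarrow> S \<ge> 0 \<Longrightarrow> (r < sqrt S) = (r^2 < S)"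
  by (metis abs_of_pos real_sqrt_abs real_sqrt_less_iff)

lemma pts_phi: "valid_oc C \<Longrightarrow> pts C = {p. phi (aug C) p = 0}"
proof (cases C)
  case (OCircle c r inw)
  assume v: "valid_oc C"
  then have r: "r > 0" using OCircle by simp
  have "dist p c = r \<longleftrightarrow> phi (aug C) p = 0" for p
  proof -
    let ?S = "(fst p - fst c)^2 + (snd p - snd c)^2"
    have "dist p c = r \<longleftrightarrow> ?S = r^2" unfolding dist_sq using r by (intro sqrt_eq_pos) auto
    also have "\<dots> \<longleftrightarrow> ?S / r - r = 0" using r by (auto simp: field_simps power2_eq_square)
    also have "\<dots> \<longleftrightarrow> phi (aug C) p = 0" unfolding OCircle phi_circle[OF r] by simp
    finally show ?thesis .
  qed
  then show ?thesis using OCircle by auto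
next
  case (OLine h d)
  then show ?thesis by (auto simp: phi_def)
qed

lemma int_phi: "valid_oc C \<Longrightarrow> ointerior C = {p. phi (aug C) p < 0}"
proof (cases C)
  case (OCircle c r inw)
  assume v: "valid_oc C"
  then have r: "r > 0" using OCircle by simp
  have "p \<in> ointerior C \<longleftrightarrow> phi (aug C) p < 0" for p
  proof -
    let ?S = "(fst p - fst c)^2 + (snd p - snd c)^2"
    have a: "dist p c < r \<longleftrightarrow> ?S < r^2" unfolding dist_sq using r by (intro sqrt_less_pos) auto
    have b: "dist p c > r \<longleftrightarrow> ?S > r^2" unfolding dist_sq using r by (intro sqrt_gt_pos) auto
    have c1: "?S < r^2 \<longleftrightarrow> ?S / r - r < 0" using r by (auto simp: field_simps power2_eq_square)
    have c2: "?S > r^2 \<longleftrightarrow> ?S / r - r > 0" using r by (auto simp: field_simps power2_eq_square)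
    show ?thesis unfolding OCircle phi_circle[OF r] using a b c1 c2 by auto
  qed
  then show ?thesis by auto
next
  case (OLine h d)
  then show ?thesis by (auto simp: phi_def)
qed

lemma lor_self: "valid_oc C \<Longrightarrow> lor (aug C) (aug C) = 1"
  by (cases C) (auto simp: lor_def Let_def field_simps power2_eq_square)

lemma aug_rev: "aug (reverse_oc C) = - aug C"
  by (cases C) (auto simp: Let_def vec_eq_iff forall_4 field_simps)

lemma aug2_line: "valid_oc C \<Longrightarrow> (aug C $ 2 = 0) = is_line C"
  by (cases C) auto

lemma mvec_aug: "mvec C = vector [aug C $ 2, aug C $ 3, aug C $ 4]"
  by (cases C) (auto simp: Let_def)

lemma valid_rev: "valid_oc (reverse_oc C) = valid_oc C"
  by (cases C) auto

lemma ext_pts_Some: "valid_oc C \<Longrightarrow> (Some q \<in> ext_pts C) = (phi (aug C) q = 0)"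
  by (auto simp: ext_pts_def pts_phi)

lemma ext_pts_None: "valid_oc C \<Longrightarrow> (None \<in> ext_pts C) = (aug C $ 2 = 0)"
  by (auto simp: ext_pts_def aug2_line)

lemma fwd_finite:
  fixes A1 b1 x1 y1 A2 b2 x2 y2 q1 q2 :: real
  assumes n1: "x1^2 + y1^2 - A1 * b1 = 1" and n2: "x2^2 + y2^2 - A2 * b2 = 1"
    and z1: "A1 - 2 * (x1 * q1 + y1 * q2) + b1 * (q1^2 + q2^2) = 0"
    and z2: "A2 - 2 * (x2 * q1 + y2 * q2) + b2 * (q1^2 + q2^2) = 0"
    and disj: "\<And>p1 p2. \<not> (A1 - 2 * (x1 * p1 + y1 * p2) + b1 * (p1^2 + p2^2) < 0 \<and>
                            A2 - 2 * (x2 * p1 + y2 * p2) + b2 * (p1^2 + p2^2) < 0)"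
  shows "x1 * x2 + y1 * y2 - (A1 * b2 + b1 * A2) / 2 = -1"
proof (rule ccontr)
  define g where "g = x1 * x2 + y1 * y2 - (A1 * b2 + b1 * A2) / 2"
  assume "x1 * x2 + y1 * y2 - (A1 * b2 + b1 * A2) / 2 \<noteq> -1"
  then have gn: "g \<noteq> -1" by (simp add: g_def)
  define a11 where "a11 = 2 * (b1 * q1 - x1)"
  define a12 where "a12 = 2 * (b1 * q2 - y1)"
  define a21 where "a21 = 2 * (b2 * q1 - x2)"
  define a22 where "a22 = 2 * (b2 * q2 - y2)"
  have na1: "a11^2 + a12^2 = 4" using n1 z1 unfolding a11_def a12_def by algebra
  have na2: "a21^2 + a22^2 = 4" using n2 z2 unfolding a21_def a22_def by algebra
  have gd: "a11 * a21 + a12 * a22 = 4 * g" using z1 z2 unfolding a11_def a12_def a21_def a22_def g_def by algebra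
  define k where "k = 4 + 4 * g"
  have vv0: "(a11 + a21)^2 + (a12 + a22)^2 = (a11^2 + a12^2) + (a21^2 + a22^2) + 2 * (a11 * a21 + a12 * a22)"
    by (simp add: power2_eq_square algebra_simps)
  have vv: "(a11 + a21)^2 + (a12 + a22)^2 = 2 * k" unfolding vv0 na1 na2 gd k_def by simp
  have "k \<ge> 0" using vv by (smt (verit) zero_le_power2)
  moreover have "k \<noteq> 0" using gn unfolding k_def by simp
  ultimately have kp: "k > 0" by simp
  define t where "t = 1 / (2 * \<bar>b1\<bar> + 2 * \<bar>b2\<bar> + 1)"
  have tp: "t > 0" unfolding t_def by (simp add: add_pos_nonneg)
  have tb1: "2 * t * b1 < 1" unfolding t_def by (simp add: field_simps; smt (verit) abs_ge_self)
  have tb2: "2 * t * b2 < 1" unfolding t_def by (simp add: field_simps; smt (verit) abs_ge_self)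
  define p1 where "p1 = q1 - t * (a11 + a21)"
  define p2 where "p2 = q2 - t * (a12 + a22)"
  have e1: "A1 - 2 * (x1 * p1 + y1 * p2) + b1 * (p1^2 + p2^2) = t * k * (2 * t * b1 - 1)"
    using z1 na1 gd vv unfolding p1_def p2_def k_def a11_def a12_def a21_def a22_def by algebra
  have e2: "A2 - 2 * (x2 * p1 + y2 * p2) + b2 * (p1^2 + p2^2) = t * k * (2 * t * b2 - 1)"
    using z2 na2 gd vv unfolding p1_def p2_def k_def a11_def a12_def a21_def a22_def by algebra
  have "t * k * (2 * t * b1 - 1) < 0" using tp kp tb1 by (simp add: mult_pos_neg)
  moreover have "t * k * (2 * t * b2 - 1) < 0" using tp kp tb2 by (simp add: mult_pos_neg)
  ultimately show False using disj[of p1 p2] e1 e2 by simp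
qed

lemma fwd_inf:
  fixes A1 x1 y1 A2 x2 y2 :: real
  assumes n1: "x1^2 + y1^2 = 1" and n2: "x2^2 + y2^2 = 1"
    and disj: "\<And>p1 p2. \<not> (A1 - 2 * (x1 * p1 + y1 * p2) < 0 \<and> A2 - 2 * (x2 * p1 + y2 * p2) < 0)"
  shows "x1 * x2 + y1 * y2 = -1"
proof (rule ccontr)
  define g where "g = x1 * x2 + y1 * y2"
  assume "x1 * x2 + y1 * y2 \<noteq> -1"
  then have gn: "g \<noteq> -1" by (simp add: g_def)
  have vv: "(x1 + x2)^2 + (y1 + y2)^2 = 2 * (1 + g)" using n1 n2 unfolding g_def by algebra
  have "1 + g \<ge> 0" using vv by (smt (verit) zero_le_power2)
  then have kp: "1 + g > 0" using gn by simp
  define T where "T = (\<bar>A1\<bar> + \<bar>A2\<bar> + 1) / (1 + g)"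
  have e1: "A1 - 2 * (x1 * (T * (x1 + x2)) + y1 * (T * (y1 + y2))) = A1 - 2 * (\<bar>A1\<bar> + \<bar>A2\<bar> + 1)"
  proof -
    have h: "x1 * (x1 + x2) + y1 * (y1 + y2) = 1 + g" using n1 unfolding g_def by algebra
    have "x1 * (T * (x1 + x2)) + y1 * (T * (y1 + y2)) = T * (x1 * (x1 + x2) + y1 * (y1 + y2))"
      by (simp add: algebra_simps)
    also have "\<dots> = T * (1 + g)" using h by simp
    also have "\<dots> = \<bar>A1\<bar> + \<bar>A2\<bar> + 1" unfolding T_def using kp by simp
    finally show ?thesis by simp
  qed
  have e2: "A2 - 2 * (x2 * (T * (x1 + x2)) + y2 * (T * (y1 + y2))) = A2 - 2 * (\<bar>A1\<bar> + \<bar>A2\<bar> + 1)"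
  proof -
    have h: "x2 * (x1 + x2) + y2 * (y1 + y2) = 1 + g" using n2 unfolding g_def by algebra
    have "x2 * (T * (x1 + x2)) + y2 * (T * (y1 + y2)) = T * (x2 * (x1 + x2) + y2 * (y1 + y2))"
      by (simp add: algebra_simps)
    also have "\<dots> = T * (1 + g)" using h by simp
    also have "\<dots> = \<bar>A1\<bar> + \<bar>A2\<bar> + 1" unfolding T_def using kp by simp
    finally show ?thesis by simp
  qed
  show False using disj[of "T * (x1 + x2)" "T * (y1 + y2)"] e1 e2 by (smt (verit) abs_ge_self)
qed

lemma fwd_pair:
  assumes v1: "valid_oc C1" and v2: "valid_oc C2" and tg: "tangent C1 C2"
    and dj: "ointerior C1 \<inter> ointerior C2 = {}"
  shows "lor (aug C1) (aug C2) = -1"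
proof -
  define w1 where "w1 = aug C1"
  define w2 where "w2 = aug C2"
  have n1: "w1$3^2 + w1$4^2 - w1$1 * w1$2 = 1" using lor_self[OF v1] unfolding w1_def lor_def by (simp add: power2_eq_square)
  have n2: "w2$3^2 + w2$4^2 - w2$1 * w2$2 = 1" using lor_self[OF v2] unfolding w2_def lor_def by (simp add: power2_eq_square)
  have dj': "\<not> (phi w1 p < 0 \<and> phi w2 p < 0)" for p
    using dj int_phi[OF v1] int_phi[OF v2] unfolding w1_def w2_def by blast
  from tg obtain q where q: "q \<in> ext_pts C1 \<inter> ext_pts C2" unfolding tangent_def by blast
  show ?thesis
  proof (cases q)
    case None
    then have z: "w1$2 = 0" "w2$2 = 0" using q ext_pts_None[OF v1] ext_pts_None[OF v2] unfolding w1_def w2_def by auto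
    have "w1$3 * w2$3 + w1$4 * w2$4 = -1"
    proof (rule fwd_inf[of _ _ _ _ "w1$1" "w2$1"])
      show "w1$3^2 + w1$4^2 = 1" using n1 z by simp
      show "w2$3^2 + w2$4^2 = 1" using n2 z by simp
      fix p1 p2
      show "\<not> (w1$1 - 2 * (w1$3 * p1 + w1$4 * p2) < 0 \<and> w2$1 - 2 * (w2$3 * p1 + w2$4 * p2) < 0)"
        using dj'[of "(p1,p2)"] z unfolding phi_def by simp
    qed
    then show ?thesis using z unfolding w1_def w2_def lor_def by simp
  next
    case (Some q')
    then have z: "phi w1 q' = 0" "phi w2 q' = 0" using q ext_pts_Some[OF v1] ext_pts_Some[OF v2] unfolding w1_def w2_def by auto
    have "w1$3 * w2$3 + w1$4 * w2$4 - (w1$1 * w2$2 + w1$2 * w2$1) / 2 = -1"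
    proof (rule fwd_finite[OF n1 n2])
      show "w1$1 - 2 * (w1$3 * fst q' + w1$4 * snd q') + w1$2 * ((fst q')^2 + (snd q')^2) = 0" using z unfolding phi_def by simp
      show "w2$1 - 2 * (w2$3 * fst q' + w2$4 * snd q') + w2$2 * ((fst q')^2 + (snd q')^2) = 0" using z unfolding phi_def by simp
      fix p1 p2
      show "\<not> (w1$1 - 2 * (w1$3 * p1 + w1$4 * p2) + w1$2 * (p1^2 + p2^2) < 0 \<and> w2$1 - 2 * (w2$3 * p1 + w2$4 * p2) + w2$2 * (p1^2 + p2^2) < 0)"
        using dj'[of "(p1,p2)"] unfolding phi_def by simp
    qed
    then show ?thesis unfolding w1_def w2_def lor_def by simp
  qed
qed

lemma all4: "(\<forall>i<(4::nat). P i) = (P 0 \<and> P 1 \<and> P 2 \<and> P 3)"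
  by (auto simp: less_Suc_eq numeral_eq_Suc)

lemma ext_pts_rev: "ext_pts (reverse_oc C) = ext_pts C"
  by (cases C) (auto simp: ext_pts_def)

lemma tangent_rev: "tangent (reverse_oc C) (reverse_oc D) = tangent C D"
  by (simp add: tangent_def ext_pts_rev)

lemma lor_neg: "lor (- u) (- v) = lor u v"
  by (simp add: lor_def)

lemma lor_sym: "lor u v = lor v u"
  by (simp add: lor_def algebra_simps)

lemma fwd_pair_or:
  assumes v1: "valid_oc C1" and v2: "valid_oc C2" and tg: "tangent C1 C2"
    and dj: "ointerior C1 \<inter> ointerior C2 = {} \<or> ointerior (reverse_oc C1) \<inter> ointerior (reverse_oc C2) = {}"
  shows "lor (aug C1) (aug C2) = -1"
  using dj
proof
  assume "ointerior C1 \<inter> ointerior C2 = {}" then show ?thesis using fwd_pair v1 v2 tg by blast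
next
  assume "ointerior (reverse_oc C1) \<inter> ointerior (reverse_oc C2) = {}"
  then have "lor (aug (reverse_oc C1)) (aug (reverse_oc C2)) = -1"
    using fwd_pair v1 v2 tg valid_rev tangent_rev by metis
  then show ?thesis by (simp add: aug_rev lor_neg)
qed

lemma fwd_config:
  assumes od: "oriented_descartes (C1, C2, C3, C4)"
  shows "valid_oc C1 \<and> valid_oc C2 \<and> valid_oc C3 \<and> valid_oc C4 \<and>
    lor (aug C1) (aug C2) = -1 \<and> lor (aug C1) (aug C3) = -1 \<and> lor (aug C1) (aug C4) = -1 \<and>
    lor (aug C2) (aug C3) = -1 \<and> lor (aug C2) (aug C4) = -1 \<and> lor (aug C3) (aug C4) = -1"
proof -
  have v: "valid_oc C1" "valid_oc C2" "valid_oc C3" "valid_oc C4"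
    and t: "tangent C1 C2" "tangent C1 C3" "tangent C1 C4" "tangent C2 C3" "tangent C2 C4" "tangent C3 C4"
    using od unfolding oriented_descartes_def descartes_config_def by (simp_all add: all4 Let_def)
  let ?L = "clist (C1, C2, C3, C4)"
  have o: "(\<forall>i<4. \<forall>j<4. i \<noteq> j \<longrightarrow> ointerior (?L ! i) \<inter> ointerior (?L ! j) = {}) \<or>
       (\<forall>i<4. \<forall>j<4. i \<noteq> j \<longrightarrow> ointerior (reverse_oc (?L ! i)) \<inter> ointerior (reverse_oc (?L ! j)) = {})"
    using od unfolding oriented_descartes_def Let_def by blast
  have pr: "ointerior (?L ! i) \<inter> ointerior (?L ! j) = {} \<or> ointerior (reverse_oc (?L ! i)) \<inter> ointerior (reverse_oc (?L ! j)) = {}"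
    if "i < 4" "j < 4" "i \<noteq> j" for i j
    using o that by blast
  have "lor (aug C1) (aug C2) = -1" using pr[of 0 1] v t fwd_pair_or by simp
  moreover have "lor (aug C1) (aug C3) = -1" using pr[of 0 2] v t fwd_pair_or by simp
  moreover have "lor (aug C1) (aug C4) = -1" using pr[of 0 3] v t fwd_pair_or by simp
  moreover have "lor (aug C2) (aug C3) = -1" using pr[of 1 2] v t fwd_pair_or by simp
  moreover have "lor (aug C2) (aug C4) = -1" using pr[of 1 3] v t fwd_pair_or by simp
  moreover have "lor (aug C3) (aug C4) = -1" using pr[of 2 3] v t fwd_pair_or by simp
  ultimately show ?thesis using v by simp
qed

definition Lh :: "real^4^4" where
  "Lh = (\<chi> i j. if (i = 1 \<and> j = 2) \<or> (i = 2 \<and> j = 1) then -1/4 else if i = j \<and> (i = 3 \<or> i = 4) then 1/2 else 0)"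

definition KK :: "real^4^4" where
  "KK = (\<chi> i j. if (i = 1 \<and> j = 2) \<or> (i = 2 \<and> j = 1) then -4 else if i = j \<and> (i = 3 \<or> i = 4) then 2 else 0)"

lemma QQ: "QD ** QD = mat 1"
  by (simp add: vec_eq_iff forall_4 QD_def matrix_matrix_mult_def sum_4 mat_def)

lemma KL: "KK ** Lh = mat 1"
  by (simp add: vec_eq_iff forall_4 KK_def Lh_def matrix_matrix_mult_def sum_4 mat_def)

lemma LK: "Lh ** KK = mat 1"
  by (simp add: vec_eq_iff forall_4 KK_def Lh_def matrix_matrix_mult_def sum_4 mat_def)

lemma gram: "(W ** Lh ** transpose W) $ i $ k = lor (W $ i) (W $ k) / 2"
  by (simp add: Lh_def matrix_matrix_mult_def sum_4 transpose_def lor_def field_simps)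

lemma fwd_alg:
  fixes W :: "real^4^4"
  assumes "\<And>i k. lor (W$i) (W$k) = (if i = k then 1 else -1)"
  shows "transpose W ** QD ** W = KK"
proof -
  have g: "W ** Lh ** transpose W = QD"
    using assms by (simp add: vec_eq_iff gram QD_def)
  have "W ** (Lh ** transpose W ** QD) = mat 1"
    by (simp add: matrix_mul_assoc g QQ)
  then have "(Lh ** transpose W ** QD) ** W = mat 1"
    using matrix_left_right_inverse by blast
  then have "Lh ** (transpose W ** QD ** W) = mat 1"
    by (simp add: matrix_mul_assoc)
  then have "KK ** (Lh ** (transpose W ** QD ** W)) = KK" by simp
  then show ?thesis by (simp add: matrix_mul_assoc KL)
qed

lemma conv_alg:
  fixes W :: "real^4^4"
  assumes "transpose W ** QD ** W = KK"
  shows "lor (W$i) (W$k) = (if i = k then 1 else -1)"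
proof -
  have "(Lh ** transpose W ** QD) ** W = mat 1"
    using assms by (simp add: matrix_mul_assoc[symmetric] LK)
  then have "W ** (Lh ** transpose W ** QD) = mat 1"
    using matrix_left_right_inverse by blast
  then have "(W ** Lh ** transpose W) ** QD = mat 1"
    by (simp add: matrix_mul_assoc)
  then have "(W ** Lh ** transpose W) ** QD ** QD = QD" by simp
  then have "W ** Lh ** transpose W = QD"
    by (simp add: matrix_mul_assoc[symmetric] QQ)
  then have "(W ** Lh ** transpose W) $ i $ k = QD $ i $ k" by simp
  then show ?thesis by (auto simp: gram QD_def)
qed

definition emb :: "3 \<Rightarrow> 4" where
  "emb j = (if j = 1 then 2 else if j = 2 then 3 else 4)"

lemma target_KK: "target3 $ j $ k = KK $ emb j $ emb k"
  using exhaust_3[of j] exhaust_3[of k] by (auto simp: target3_def KK_def emb_def)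

lemma sub_prod:
  fixes M :: "real^3^4" and W :: "real^4^4"
  assumes "\<And>i j. W $ i $ emb j = M $ i $ j"
  shows "(transpose M ** QD ** M) $ j $ k = (transpose W ** QD ** W) $ emb j $ emb k"
  by (simp add: matrix_matrix_mult_def transpose_def assms)

lemma sub_prod_eq:
  fixes M :: "real^3^4" and W :: "real^4^4"
  assumes "\<And>i j. W $ i $ emb j = M $ i $ j"
  shows "(transpose M ** QD ** M = target3) = (\<forall>j k. (transpose W ** QD ** W) $ emb j $ emb k = KK $ emb j $ emb k)"
  by (simp add: vec_eq_iff sub_prod[OF assms] target_KK)

definition Wof :: "config \<Rightarrow> real^4^4" where
  "Wof D = (case D of (C1, C2, C3, C4) \<Rightarrow> vector [aug C1, aug C2, aug C3, aug C4])"

lemma Wof_MD: "Wof D $ i $ emb j = MD D $ i $ j"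
proof -
  obtain C1 C2 C3 C4 where D: "D = (C1, C2, C3, C4)" by (cases D) auto
  show ?thesis unfolding D Wof_def
    using exhaust_4[of i] exhaust_3[of j] by (auto simp: emb_def mvec_aug)
qed

lemma KK12_zero:
  fixes W :: "real^4^4"
  assumes "\<And>i. W $ i $ 2 = 0"
  shows "transpose W ** QD ** W \<noteq> KK"
proof
  assume "transpose W ** QD ** W = KK"
  then have "(transpose W ** QD ** W) $ 1 $ 2 = KK $ 1 $ 2" by simp
  then show False using assms by (simp add: matrix_matrix_mult_def transpose_def KK_def)
qed


lemma forward:
  assumes od: "oriented_descartes D"
  shows "column 1 (MD D) \<noteq> 0 \<and> transpose (MD D) ** QD ** MD D = target3"
proof -
  obtain C1 C2 C3 C4 where D: "D = (C1, C2, C3, C4)" by (cases D) auto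
  have f: "valid_oc C1 \<and> valid_oc C2 \<and> valid_oc C3 \<and> valid_oc C4 \<and>
    lor (aug C1) (aug C2) = -1 \<and> lor (aug C1) (aug C3) = -1 \<and> lor (aug C1) (aug C4) = -1 \<and>
    lor (aug C2) (aug C3) = -1 \<and> lor (aug C2) (aug C4) = -1 \<and> lor (aug C3) (aug C4) = -1"
    using fwd_config od D by simp
  have f2: "lor (aug C2) (aug C1) = -1" "lor (aug C3) (aug C1) = -1" "lor (aug C4) (aug C1) = -1"
    "lor (aug C3) (aug C2) = -1" "lor (aug C4) (aug C2) = -1" "lor (aug C4) (aug C3) = -1"
    using f lor_sym by metis+
  have f3: "lor (aug C1) (aug C1) = 1" "lor (aug C2) (aug C2) = 1" "lor (aug C3) (aug C3) = 1" "lor (aug C4) (aug C4) = 1"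
    using f lor_self by blast+
  have l: "lor (Wof D $ i) (Wof D $ k) = (if i = k then 1 else -1)" for i k
    apply (insert exhaust_4[of i] exhaust_4[of k])
    apply (elim disjE)
    by (simp_all add: D Wof_def f f2 f3)
  have WK: "transpose (Wof D) ** QD ** Wof D = KK" by (rule fwd_alg[OF l])
  have t: "transpose (MD D) ** QD ** MD D = target3"
    using sub_prod_eq[of "Wof D" "MD D", OF Wof_MD] WK by simp
  have c: "column 1 (MD D) \<noteq> 0"
  proof
    assume "column 1 (MD D) = 0"
    then have "Wof D $ i $ 2 = 0" for i
      using Wof_MD[of D i 1] by (simp add: column_def vec_eq_iff emb_def)
    then show False using KK12_zero WK by blast
  qed
  show ?thesis using c t by simp
qed

lemma lor_add_left: "lor (u + v) w = lor u w + lor v w"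
  by (simp add: lor_def field_simps)
lemma lor_add_right: "lor w (u + v) = lor w u + lor w v"
  by (simp add: lor_def field_simps)
lemma lor_uminus_left: "lor (- u) w = - lor u w"
  by (simp add: lor_def field_simps)
lemma lor_zero_right: "lor w 0 = 0"
  by (simp add: lor_def)
lemma phi_add: "phi (u + v) p = phi u p + phi v p"
  by (simp add: phi_def algebra_simps)
lemma phi_uminus: "phi (- u) p = - phi u p"
  by (simp add: phi_def algebra_simps)

definition tp :: "real^4 \<Rightarrow> (real \<times> real) option" where
  "tp n = (if n$2 \<noteq> 0 then Some (n$3 / n$2, n$4 / n$2) else None)"

lemma null_sq: "lor n n = 0 \<Longrightarrow> n$3^2 + n$4^2 = n$1 * n$2"
  by (simp add: lor_def power2_eq_square)

lemma null_phi_sq: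
  assumes "lor n n = 0"
  shows "n$2 * phi n q = (n$3 - n$2 * fst q)^2 + (n$4 - n$2 * snd q)^2"
proof -
  have "n$3^2 + n$4^2 = n$1 * n$2" using null_sq[OF assms] .
  then show ?thesis unfolding phi_def by algebra
qed

lemma null_b0: "lor n n = 0 \<Longrightarrow> n$2 = 0 \<Longrightarrow> n$3 = 0 \<and> n$4 = 0"
  using null_sq[of n] by (simp add: sum_power2_eq_zero_iff)

lemma conv_pts:
  assumes n1: "lor w1 w1 = 1" and n2: "lor w2 w2 = 1" and g: "lor w1 w2 = -1" and nz: "w1 + w2 \<noteq> 0"
  shows "(w1 + w2)$2 \<noteq> 0 \<Longrightarrow> (phi w1 q = 0 \<and> phi w2 q = 0) = (q = ((w1 + w2)$3 / (w1 + w2)$2, (w1 + w2)$4 / (w1 + w2)$2))"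
    and "(w1 + w2)$2 = 0 \<Longrightarrow> w1$2 = 0 \<and> w2$2 = 0 \<and> \<not> (phi w1 q = 0 \<and> phi w2 q = 0)"
proof -
  define n where "n = w1 + w2"
  have nn: "lor n n = 0" unfolding n_def using n1 n2 g lor_sym[of w2 w1]
    by (simp add: lor_add_left lor_add_right)
  have n1n: "lor w1 n = 0" unfolding n_def using n1 g by (simp add: lor_add_right)
  have n2n: "lor w2 n = 0" unfolding n_def using n2 g lor_sym[of w2 w1] by (simp add: lor_add_right)
  have sq: "n$3^2 + n$4^2 = n$1 * n$2" using null_sq[OF nn] .
  {
    assume b: "(w1 + w2)$2 \<noteq> 0"
    then have b': "n$2 \<noteq> 0" unfolding n_def .
    show "(phi w1 q = 0 \<and> phi w2 q = 0) = (q = ((w1 + w2)$3 / (w1 + w2)$2, (w1 + w2)$4 / (w1 + w2)$2))"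
      unfolding n_def[symmetric]
    proof
      assume h: "phi w1 q = 0 \<and> phi w2 q = 0"
      then have "phi n q = 0" unfolding n_def by (simp add: phi_add)
      then have "(n$3 - n$2 * fst q)^2 + (n$4 - n$2 * snd q)^2 = 0"
        using null_phi_sq[OF nn, of q] by simp
      then have "n$3 - n$2 * fst q = 0" "n$4 - n$2 * snd q = 0" by (simp_all add: sum_power2_eq_zero_iff)
      then show "q = (n$3 / n$2, n$4 / n$2)" using b' by (cases q) (simp add: field_simps)
    next
      assume q: "q = (n$3 / n$2, n$4 / n$2)"
      have e: "phi w q = - 2 * lor w n / n$2" for w
      proof -
        have "n$2 * (n$2 * phi w q + 2 * lor w n) = 0"
          unfolding q phi_def lor_def using b' sq by (simp add: field_simps power2_eq_square)
        then have "n$2 * phi w q + 2 * lor w n = 0" using b' by simp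
        then show ?thesis using b' by (simp add: field_simps)
      qed
      show "phi w1 q = 0 \<and> phi w2 q = 0" using e[of w1] e[of w2] n1n n2n by simp
    qed
  next
    assume b: "(w1 + w2)$2 = 0"
    then have b': "n$2 = 0" unfolding n_def .
    have z: "n$3 = 0" "n$4 = 0" using null_b0[OF nn b'] by auto
    have "n \<noteq> 0" using nz unfolding n_def .
    then have n1nz: "n$1 \<noteq> 0" using b' z by (simp add: vec_eq_iff forall_4)
    have "w1$2 = 0" using n1n b' z n1nz unfolding lor_def by simp
    moreover have "w2$2 = 0" using b' calculation unfolding n_def by simp
    moreover have "\<not> (phi w1 q = 0 \<and> phi w2 q = 0)"
    proof
      assume "phi w1 q = 0 \<and> phi w2 q = 0"
      then have "phi n q = 0" unfolding n_def by (simp add: phi_add)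
      then show False using b' z n1nz unfolding phi_def by simp
    qed
    ultimately show "w1$2 = 0 \<and> w2$2 = 0 \<and> \<not> (phi w1 q = 0 \<and> phi w2 q = 0)" by simp
  }
qed

lemma conv_common:
  assumes v1: "valid_oc C1" and v2: "valid_oc C2" and g: "lor (aug C1) (aug C2) = -1"
    and nz: "aug C1 + aug C2 \<noteq> 0"
  shows "ext_pts C1 \<inter> ext_pts C2 = {tp (aug C1 + aug C2)}"
proof -
  define w1 where "w1 = aug C1"
  define w2 where "w2 = aug C2"
  have n1: "lor w1 w1 = 1" "lor w2 w2 = 1" using lor_self v1 v2 unfolding w1_def w2_def by auto
  have g': "lor w1 w2 = -1" "w1 + w2 \<noteq> 0" using g nz unfolding w1_def w2_def by auto
  have S: "Some q \<in> ext_pts C1 \<inter> ext_pts C2 \<longleftrightarrow> phi w1 q = 0 \<and> phi w2 q = 0" for q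
    using ext_pts_Some[OF v1] ext_pts_Some[OF v2] unfolding w1_def w2_def by auto
  have N: "None \<in> ext_pts C1 \<inter> ext_pts C2 \<longleftrightarrow> w1$2 = 0 \<and> w2$2 = 0"
    using ext_pts_None[OF v1] ext_pts_None[OF v2] unfolding w1_def w2_def by auto
  show ?thesis
  proof (cases "(w1 + w2)$2 = 0")
    case True
    note c = conv_pts(2)[OF n1 g' True]
    have "x \<in> ext_pts C1 \<inter> ext_pts C2 \<longleftrightarrow> x = None" for x
      using c S N by (cases x) auto
    then show ?thesis using True unfolding tp_def w1_def w2_def by auto
  next
    case False
    note c = conv_pts(1)[OF n1 g' False]
    have "x \<in> ext_pts C1 \<inter> ext_pts C2 \<longleftrightarrow> x = tp (w1 + w2)" for x
      using c S N False unfolding tp_def by (cases x) auto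
    then show ?thesis unfolding w1_def w2_def by auto
  qed
qed

lemma conv_tangent:
  assumes "valid_oc C1" "valid_oc C2" "lor (aug C1) (aug C2) = -1" "aug C1 + aug C2 \<noteq> 0"
  shows "tangent C1 C2 \<and> tangency_point C1 C2 = tp (aug C1 + aug C2)"
  using conv_common[OF assms] unfolding tangent_def tangency_point_def by auto

lemma tp_neq:
  assumes nn: "lor n n = 0" and mm: "lor m m = 0" and nm: "lor n m \<noteq> 0"
  shows "tp n \<noteq> tp m"
proof
  assume e: "tp n = tp m"
  have sn: "n$3^2 + n$4^2 = n$1 * n$2" and sm: "m$3^2 + m$4^2 = m$1 * m$2" using null_sq nn mm by auto
  show False
  proof (cases "n$2 = 0")
    case True
    then have "m$2 = 0" using e unfolding tp_def by (auto split: if_splits)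
    then show False using True null_b0[OF nn] null_b0[OF mm] nm unfolding lor_def by simp
  next
    case False
    then have m2: "m$2 \<noteq> 0" using e unfolding tp_def by (auto split: if_splits)
    have p: "n$3 / n$2 = m$3 / m$2" "n$4 / n$2 = m$4 / m$2" using e False m2 unfolding tp_def by auto
    define p1 where "p1 = m$3 / m$2"
    define p2 where "p2 = m$4 / m$2"
    have a: "n$3 = n$2 * p1" "n$4 = n$2 * p2" "m$3 = m$2 * p1" "m$4 = m$2 * p2"
      using p False m2 unfolding p1_def p2_def by (auto simp: field_simps)
    have "n$2 * (n$1 - n$2 * (p1^2 + p2^2)) = 0" using sn a by (simp add: power2_eq_square algebra_simps)
    then have b1: "n$1 = n$2 * (p1^2 + p2^2)" using False by simp
    have "m$2 * (m$1 - m$2 * (p1^2 + p2^2)) = 0" using sm a by (simp add: power2_eq_square algebra_simps)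
    then have b2: "m$1 = m$2 * (p1^2 + p2^2)" using m2 by simp
    have "lor n m = 0" unfolding lor_def a b1 b2 by (simp add: algebra_simps power2_eq_square)
    then show False using nm by simp
  qed
qed

lemma phi_nonneg:
  assumes nn: "lor n n = 0" and s: "n$2 > 0 \<or> (n$2 = 0 \<and> n$1 > 0)"
  shows "phi n p \<ge> 0"
  using s
proof
  assume b: "n$2 > 0"
  have "n$2 * phi n p \<ge> 0" using null_phi_sq[OF nn, of p] by simp
  then show ?thesis using b by (simp add: zero_le_mult_iff)
next
  assume "n$2 = 0 \<and> n$1 > 0"
  then show ?thesis using null_b0[OF nn] unfolding phi_def by simp
qed

lemma pair_sign:
  assumes nn: "lor n n = 0" and nm: "lor n m = -4" and sig: "n$2 + m$2 > 0" and pr: "n$2 * m$2 \<ge> 0"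
  shows "n$2 > 0 \<or> (n$2 = 0 \<and> n$1 > 0)"
proof (cases "n$2 = 0")
  case True
  then have "n$3 = 0" "n$4 = 0" using null_b0[OF nn] by auto
  then have "n$1 * m$2 = 8" using nm True unfolding lor_def by simp
  moreover have "m$2 > 0" using sig True by simp
  ultimately have "n$1 > 0" by (smt (verit) mult_nonpos_nonneg)
  then show ?thesis using True by simp
next
  case False
  have "n$2 > 0"
  proof (rule ccontr)
    assume "\<not> n$2 > 0"
    then have "n$2 < 0" using False by simp
    then have "m$2 \<le> 0" using pr by (smt (verit) mult_neg_pos)
    then show False using sig \<open>n$2 < 0\<close> by simp
  qed
  then show ?thesis by simp
qed

definition Bq :: "real^4 \<Rightarrow> real^4 \<Rightarrow> real" where
  "Bq u v = u$1 * v$1 + u$2 * v$2 + u$3 * v$3 + u$4 * v$4 - (u$1 + u$2 + u$3 + u$4) * (v$1 + v$2 + v$3 + v$4) / 2"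

lemma TQ:
  fixes A :: "real^'n^4"
  shows "(transpose A ** QD ** A) $ j $ k = Bq (column j A) (column k A)"
  by (simp add: matrix_matrix_mult_def transpose_def QD_def sum_4 Bq_def column_def field_simps)

lemma Bq_sym: "Bq u v = Bq v u"
  by (simp add: Bq_def algebra_simps)
lemma Bq_add_left: "Bq (u + v) w = Bq u w + Bq v w"
  by (simp add: Bq_def field_simps)
lemma Bq_diff_left: "Bq (u - v) w = Bq u w - Bq v w"
  by (simp add: Bq_def field_simps)
lemma Bq_scale_left: "Bq (a *\<^sub>R u) w = a * Bq u w"
  by (simp add: Bq_def field_simps)
lemma Bq_add_right: "Bq w (u + v) = Bq w u + Bq w v"
  by (simp add: Bq_def field_simps)
lemma Bq_scale_right: "Bq w (a *\<^sub>R u) = a * Bq w u"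
  by (simp add: Bq_def field_simps)
lemma Bq_diff_right: "Bq w (u - v) = Bq w u - Bq w v"
  by (simp add: Bq_def field_simps)

lemma exists_u:
  assumes "b \<noteq> 0" "Bq b b = 0"
  shows "\<exists>u. Bq u b \<noteq> 0"
proof (rule ccontr)
  assume "\<not> (\<exists>u. Bq u b \<noteq> 0)"
  then have h: "Bq u b = 0" for u by simp
  define sg where "sg = b$1 + b$2 + b$3 + b$4"
  have "b$1 = sg/2" using h[of "vector [1,0,0,0]"] unfolding Bq_def sg_def by simp
  moreover have "b$2 = sg/2" using h[of "vector [0,1,0,0]"] unfolding Bq_def sg_def by simp
  moreover have "b$3 = sg/2" using h[of "vector [0,0,1,0]"] unfolding Bq_def sg_def by simp
  moreover have "b$4 = sg/2" using h[of "vector [0,0,0,1]"] unfolding Bq_def sg_def by simp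
  ultimately have "sg = 0" unfolding sg_def by simp
  then have "b$1 = 0" "b$2 = 0" "b$3 = 0" "b$4 = 0" using \<open>b$1 = sg/2\<close> \<open>b$2 = sg/2\<close> \<open>b$3 = sg/2\<close> \<open>b$4 = sg/2\<close> by auto
  then have "b = 0" by (simp add: vec_eq_iff forall_4)
  then show False using assms by simp
qed

lemma exists_v:
  assumes bnz: "b \<noteq> 0" and bb: "Bq b b = 0" and bx: "Bq b x = 0" and by': "Bq b y = 0"
    and xx: "Bq x x = 2" and yy: "Bq y y = 2" and xy: "Bq x y = 0"
  shows "\<exists>v. Bq v v = 0 \<and> Bq v b = -4 \<and> Bq v x = 0 \<and> Bq v y = 0"
proof -
  obtain u where s: "Bq u b \<noteq> 0" using exists_u[OF bnz bb] by blast
  define u' where "u' = u - (Bq u x / 2) *\<^sub>R x - (Bq u y / 2) *\<^sub>R y"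
  have u'x: "Bq u' x = 0" unfolding u'_def using xx xy Bq_sym[of x y] by (simp add: Bq_diff_left Bq_scale_left)
  have u'y: "Bq u' y = 0" unfolding u'_def using yy xy Bq_sym[of x y] by (simp add: Bq_diff_left Bq_scale_left)
  have u'b: "Bq u' b = Bq u b" unfolding u'_def using bx by' Bq_sym[of x b] Bq_sym[of y b] by (simp add: Bq_diff_left Bq_scale_left)
  define sv where "sv = Bq u b"
  define al where "al = -4 / sv"
  define ga where "ga = - al * Bq u' u' / (2 * sv)"
  define v where "v = al *\<^sub>R u' + ga *\<^sub>R b"
  have "Bq v b = al * Bq u' b + ga * Bq b b" unfolding v_def by (simp only: Bq_add_left Bq_scale_left)
  then have vb: "Bq v b = -4" using u'b bb s by (simp add: al_def sv_def)
  have vx: "Bq v x = 0" unfolding v_def using u'x bx by (simp add: Bq_add_left Bq_scale_left)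
  have vy: "Bq v y = 0" unfolding v_def using u'y by' by (simp add: Bq_add_left Bq_scale_left)
  have "Bq v v = al * al * Bq u' u' + 2 * al * ga * Bq u' b + ga * ga * Bq b b"
    unfolding v_def using Bq_sym[of b u'] by (simp add: Bq_add_left Bq_scale_left Bq_add_right Bq_scale_right algebra_simps)
  also have "\<dots> = 0" using bb u'b s unfolding ga_def sv_def by (simp add: field_simps)
  finally show ?thesis using vb vx vy by blast
qed

lemma build_W:
  fixes M :: "real^3^4"
  assumes c1: "column 1 M \<noteq> 0" and eq: "transpose M ** QD ** M = target3"
  shows "\<exists>W::real^4^4. (\<forall>i j. W $ i $ emb j = M $ i $ j) \<and> transpose W ** QD ** W = KK"
proof -
  define b where "b = column 1 M"
  define x where "x = column 2 M"
  define y where "y = column 3 M"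
  have E: "Bq (column j M) (column k M) = target3 $ j $ k" for j k
    using eq TQ[of M j k] by simp
  have bb: "Bq b b = 0" and bx: "Bq b x = 0" and by': "Bq b y = 0" and xx: "Bq x x = 2" and yy: "Bq y y = 2" and xy: "Bq x y = 0"
    using E[of 1 1] E[of 1 2] E[of 1 3] E[of 2 2] E[of 3 3] E[of 2 3] unfolding b_def x_def y_def target3_def by simp_all
  obtain v where v: "Bq v v = 0" "Bq v b = -4" "Bq v x = 0" "Bq v y = 0"
    using exists_v[OF _ bb bx by' xx yy xy] c1 unfolding b_def by blast
  define W :: "real^4^4" where "W = (\<chi> i. vector [v$i, M$i$1, M$i$2, M$i$3])"
  have cW: "column 1 W = v" "column 2 W = b" "column 3 W = x" "column 4 W = y"
    unfolding W_def b_def x_def y_def column_def by (simp_all add: vec_eq_iff)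
  have s: "Bq b v = -4" "Bq x v = 0" "Bq y v = 0" "Bq x b = 0" "Bq y b = 0" "Bq y x = 0"
    using v bx by' xy Bq_sym by metis+
  have "transpose W ** QD ** W = KK"
    by (simp add: vec_eq_iff forall_4 TQ cW KK_def v bb bx by' xx yy xy s)
  moreover have "\<forall>i j. W $ i $ emb j = M $ i $ j"
    unfolding W_def emb_def using exhaust_3 by auto
  ultimately show ?thesis by blast
qed

definition ocof :: "real^4 \<Rightarrow> ocircle" where
  "ocof w = (if w$2 \<noteq> 0 then OCircle (w$3 / w$2, w$4 / w$2) (1 / \<bar>w$2\<bar>) (w$2 > 0)
             else OLine (w$3, w$4) (w$1 / 2))"

lemma ocof_valid: "lor w w = 1 \<Longrightarrow> valid_oc (ocof w)"
  by (auto simp: ocof_def lor_def power2_eq_square)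

lemma ocof_aug_eq:
  assumes "lor w w = 1"
  shows "aug (ocof w) = w"
proof (cases "w$2 = 0")
  case True
  then show ?thesis by (simp add: ocof_def vec_eq_iff forall_4)
next
  case False
  have n: "w$3 * w$3 + w$4 * w$4 - w$1 * w$2 = 1" using assms unfolding lor_def by simp
  have b: "(if 0 < w$2 then 1 / (1 / \<bar>w$2\<bar>) else - 1 / (1 / \<bar>w$2\<bar>)) = w$2" by auto
  have "w$2 * ((w$3 / w$2)\<^sup>2 + (w$4 / w$2)\<^sup>2) - 1 / w$2 = w$1"
    using False n by (simp add: field_simps power2_eq_square)
  then show ?thesis using False unfolding ocof_def
    by (simp add: Let_def b vec_eq_iff forall_4 del: divide_divide_eq_right)
qed

lemma aug_ocof: "valid_oc C \<Longrightarrow> ocof (aug C) = C"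
  by (cases C) (auto simp: ocof_def Let_def)

lemma G_pair:
  assumes "lor a a = 1" "lor b b = 1" "lor c c = 1" "lor d d = 1"
    "lor a b = -1" "lor a c = -1" "lor a d = -1" "lor b c = -1" "lor b d = -1" "lor c d = -1"
    "lor b a = -1" "lor c a = -1" "lor d a = -1" "lor c b = -1" "lor d b = -1" "lor d c = -1"
  shows "lor (a + b) (a + b) = 0" "lor (a + b) (c + d) = -4" "lor (a + b) (a + c) = -2" "a + b \<noteq> 0"
proof -
  show "lor (a + b) (a + b) = 0" "lor (a + b) (c + d) = -4" "lor (a + b) (a + c) = -2"
    using assms by (simp_all add: lor_add_left lor_add_right)
  have "lor c (a + b) = -2" using assms by (simp add: lor_add_right)
  then show "a + b \<noteq> 0" using lor_zero_right[of c] by auto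
qed

lemma pair_disj:
  assumes nn: "lor (a + b) (a + b) = 0" and nm: "lor (a + b) (c + d) = -4"
    and sig: "(a + b)$2 + (c + d)$2 > 0" and pr: "(a + b)$2 * (c + d)$2 \<ge> 0"
  shows "\<not> (phi a p < 0 \<and> phi b p < 0)"
proof -
  have "phi (a + b) p \<ge> 0" by (rule phi_nonneg[OF nn pair_sign[OF nn nm sig pr]])
  then show ?thesis by (simp add: phi_add)
qed

lemma prod_nonneg:
  fixes b1 b2 b3 b4 :: real
  assumes "b1^2 + b2^2 + b3^2 + b4^2 = (b1 + b2 + b3 + b4)^2 / 2"
  shows "(b1 + b2) * (b3 + b4) \<ge> 0"
proof -
  have "2 * ((b1 + b2) * (b3 + b4)) = (b1 - b2)^2 + (b3 - b4)^2"
    using assms by (simp add: power2_eq_square field_simps)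
  moreover have "(b1 - b2)^2 + (b3 - b4)^2 \<ge> 0" by simp
  ultimately show ?thesis by linarith
qed

lemma pairs_set: "{(i, j). i < j \<and> j < (4::nat)} = {(0,1),(0,2),(0,3),(1,2),(1,3),(2,3)}"
  by (auto simp: less_Suc_eq numeral_eq_Suc)

definition gram4 :: "real^4 \<Rightarrow> real^4 \<Rightarrow> real^4 \<Rightarrow> real^4 \<Rightarrow> bool" where
  "gram4 a b c d \<longleftrightarrow> lor a a = 1 \<and> lor b b = 1 \<and> lor c c = 1 \<and> lor d d = 1 \<and>
     lor a b = -1 \<and> lor a c = -1 \<and> lor a d = -1 \<and> lor b c = -1 \<and> lor b d = -1 \<and> lor c d = -1"

lemma gram4_facts:
  assumes "gram4 a b c d"
  shows "lor a a = 1" "lor b b = 1" "lor c c = 1" "lor d d = 1"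
    "lor a b = -1" "lor a c = -1" "lor a d = -1" "lor b c = -1" "lor b d = -1" "lor c d = -1"
    "lor b a = -1" "lor c a = -1" "lor d a = -1" "lor c b = -1" "lor d b = -1" "lor d c = -1"
  using assms lor_sym unfolding gram4_def by metis+

lemma gram4_neg: "gram4 (- a) (- b) (- c) (- d) = gram4 a b c d"
  by (simp add: gram4_def lor_neg)

lemma orient_all:
  assumes G: "gram4 a b c d" and sig: "a$2 + b$2 + c$2 + d$2 > 0"
    and p1: "(a$2 + b$2) * (c$2 + d$2) \<ge> 0" and p2: "(a$2 + c$2) * (b$2 + d$2) \<ge> 0"
    and p3: "(a$2 + d$2) * (b$2 + c$2) \<ge> 0"
  shows "\<not> (phi a p < 0 \<and> phi b p < 0)" "\<not> (phi a p < 0 \<and> phi c p < 0)" "\<not> (phi a p < 0 \<and> phi d p < 0)"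
    "\<not> (phi b p < 0 \<and> phi c p < 0)" "\<not> (phi b p < 0 \<and> phi d p < 0)" "\<not> (phi c p < 0 \<and> phi d p < 0)"
proof -
  note F = gram4_facts[OF G]
  show "\<not> (phi a p < 0 \<and> phi b p < 0)"
    by (rule pair_disj[of a b c d]) (use F sig p1 G_pair[of a b c d] in \<open>simp_all add: algebra_simps\<close>)
  show "\<not> (phi a p < 0 \<and> phi c p < 0)"
    by (rule pair_disj[of a c b d]) (use F sig p2 G_pair[of a c b d] in \<open>simp_all add: algebra_simps\<close>)
  show "\<not> (phi a p < 0 \<and> phi d p < 0)"
    by (rule pair_disj[of a d b c]) (use F sig p3 G_pair[of a d b c] in \<open>simp_all add: algebra_simps\<close>)
  show "\<not> (phi b p < 0 \<and> phi c p < 0)"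
    by (rule pair_disj[of b c a d]) (use F sig p3 G_pair[of b c a d] in \<open>simp_all add: algebra_simps\<close>)
  show "\<not> (phi b p < 0 \<and> phi d p < 0)"
    by (rule pair_disj[of b d a c]) (use F sig p2 G_pair[of b d a c] in \<open>simp_all add: algebra_simps\<close>)
  show "\<not> (phi c p < 0 \<and> phi d p < 0)"
    by (rule pair_disj[of c d a b]) (use F sig p1 G_pair[of c d a b] in \<open>simp_all add: algebra_simps\<close>)
qed

lemma tan_w:
  assumes "lor w w = 1" "lor w' w' = 1" "lor w w' = -1" "w + w' \<noteq> 0"
  shows "tangent (ocof w) (ocof w') \<and> tangency_point (ocof w) (ocof w') = tp (w + w')"
  using conv_tangent[of "ocof w" "ocof w'"] assms ocof_valid ocof_aug_eq by simp

lemma prod3: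
  fixes b1 b2 b3 b4 :: real
  assumes "b1^2 + b2^2 + b3^2 + b4^2 = (b1 + b2 + b3 + b4)^2 / 2"
  shows "(b1 + b2) * (b3 + b4) \<ge> 0" "(b1 + b3) * (b2 + b4) \<ge> 0" "(b1 + b4) * (b2 + b3) \<ge> 0"
proof -
  show "(b1 + b2) * (b3 + b4) \<ge> 0" by (rule prod_nonneg[OF assms])
  show "(b1 + b3) * (b2 + b4) \<ge> 0" by (rule prod_nonneg) (use assms in \<open>simp add: algebra_simps\<close>)
  show "(b1 + b4) * (b2 + b3) \<ge> 0" by (rule prod_nonneg) (use assms in \<open>simp add: algebra_simps\<close>)
qed

lemma disj_set: "(\<And>p. \<not> (phi a p < 0 \<and> phi b p < 0)) \<Longrightarrow>
   {p. phi a p < 0} \<inter> {p. phi b p < 0} = {} \<and> {p. phi b p < 0} \<inter> {p. phi a p < 0} = {}"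
  by auto

lemma conv_config:
  assumes G: "gram4 w1 w2 w3 w4" and sig: "w1$2 + w2$2 + w3$2 + w4$2 \<noteq> 0"
    and rel: "(w1$2)^2 + (w2$2)^2 + (w3$2)^2 + (w4$2)^2 = (w1$2 + w2$2 + w3$2 + w4$2)^2 / 2"
  shows "oriented_descartes (ocof w1, ocof w2, ocof w3, ocof w4)"
proof -
  note F = gram4_facts[OF G]
  have V: "valid_oc (ocof w1)" "valid_oc (ocof w2)" "valid_oc (ocof w3)" "valid_oc (ocof w4)"
    using F ocof_valid by auto
  have A: "aug (ocof w1) = w1" "aug (ocof w2) = w2" "aug (ocof w3) = w3" "aug (ocof w4) = w4"
    using F ocof_aug_eq by auto
  have I: "ointerior (ocof w) = {p. phi w p < 0}" "ointerior (reverse_oc (ocof w)) = {p. phi (- w) p < 0}"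
    if "lor w w = 1" for w
    using int_phi[of "ocof w"] int_phi[of "reverse_oc (ocof w)"] ocof_valid[OF that] ocof_aug_eq[OF that]
      valid_rev aug_rev by auto
  note I1 = I[OF F(1)] and I2 = I[OF F(2)] and I3 = I[OF F(3)] and I4 = I[OF F(4)]
  have T12: "tangent (ocof w1) (ocof w2) \<and> tangency_point (ocof w1) (ocof w2) = tp (w1 + w2)"
    by (rule tan_w) (use F G_pair[of w1 w2 w3 w4] in simp_all)
  have T21: "tangent (ocof w2) (ocof w1) \<and> tangency_point (ocof w2) (ocof w1) = tp (w2 + w1)"
    by (rule tan_w) (use F G_pair[of w2 w1 w3 w4] in simp_all)
  have T13: "tangent (ocof w1) (ocof w3) \<and> tangency_point (ocof w1) (ocof w3) = tp (w1 + w3)"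
    by (rule tan_w) (use F G_pair[of w1 w3 w2 w4] in simp_all)
  have T31: "tangent (ocof w3) (ocof w1) \<and> tangency_point (ocof w3) (ocof w1) = tp (w3 + w1)"
    by (rule tan_w) (use F G_pair[of w3 w1 w2 w4] in simp_all)
  have T14: "tangent (ocof w1) (ocof w4) \<and> tangency_point (ocof w1) (ocof w4) = tp (w1 + w4)"
    by (rule tan_w) (use F G_pair[of w1 w4 w2 w3] in simp_all)
  have T41: "tangent (ocof w4) (ocof w1) \<and> tangency_point (ocof w4) (ocof w1) = tp (w4 + w1)"
    by (rule tan_w) (use F G_pair[of w4 w1 w2 w3] in simp_all)
  have T23: "tangent (ocof w2) (ocof w3) \<and> tangency_point (ocof w2) (ocof w3) = tp (w2 + w3)"
    by (rule tan_w) (use F G_pair[of w2 w3 w1 w4] in simp_all)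
  have T32: "tangent (ocof w3) (ocof w2) \<and> tangency_point (ocof w3) (ocof w2) = tp (w3 + w2)"
    by (rule tan_w) (use F G_pair[of w3 w2 w1 w4] in simp_all)
  have T24: "tangent (ocof w2) (ocof w4) \<and> tangency_point (ocof w2) (ocof w4) = tp (w2 + w4)"
    by (rule tan_w) (use F G_pair[of w2 w4 w1 w3] in simp_all)
  have T42: "tangent (ocof w4) (ocof w2) \<and> tangency_point (ocof w4) (ocof w2) = tp (w4 + w2)"
    by (rule tan_w) (use F G_pair[of w4 w2 w1 w3] in simp_all)
  have T34: "tangent (ocof w3) (ocof w4) \<and> tangency_point (ocof w3) (ocof w4) = tp (w3 + w4)"
    by (rule tan_w) (use F G_pair[of w3 w4 w1 w2] in simp_all)
  have T43: "tangent (ocof w4) (ocof w3) \<and> tangency_point (ocof w4) (ocof w3) = tp (w4 + w3)"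
    by (rule tan_w) (use F G_pair[of w4 w3 w1 w2] in simp_all)
  have N1213: "tp (w1 + w2) \<noteq> tp (w1 + w3)"
    by (rule tp_neq) (use F in \<open>simp_all add: lor_add_left lor_add_right\<close>)
  have N1214: "tp (w1 + w2) \<noteq> tp (w1 + w4)"
    by (rule tp_neq) (use F in \<open>simp_all add: lor_add_left lor_add_right\<close>)
  have N1223: "tp (w1 + w2) \<noteq> tp (w2 + w3)"
    by (rule tp_neq) (use F in \<open>simp_all add: lor_add_left lor_add_right\<close>)
  have N1224: "tp (w1 + w2) \<noteq> tp (w2 + w4)"
    by (rule tp_neq) (use F in \<open>simp_all add: lor_add_left lor_add_right\<close>)
  have N1234: "tp (w1 + w2) \<noteq> tp (w3 + w4)"
    by (rule tp_neq) (use F in \<open>simp_all add: lor_add_left lor_add_right\<close>)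
  have N1314: "tp (w1 + w3) \<noteq> tp (w1 + w4)"
    by (rule tp_neq) (use F in \<open>simp_all add: lor_add_left lor_add_right\<close>)
  have N1323: "tp (w1 + w3) \<noteq> tp (w2 + w3)"
    by (rule tp_neq) (use F in \<open>simp_all add: lor_add_left lor_add_right\<close>)
  have N1324: "tp (w1 + w3) \<noteq> tp (w2 + w4)"
    by (rule tp_neq) (use F in \<open>simp_all add: lor_add_left lor_add_right\<close>)
  have N1334: "tp (w1 + w3) \<noteq> tp (w3 + w4)"
    by (rule tp_neq) (use F in \<open>simp_all add: lor_add_left lor_add_right\<close>)
  have N1423: "tp (w1 + w4) \<noteq> tp (w2 + w3)"
    by (rule tp_neq) (use F in \<open>simp_all add: lor_add_left lor_add_right\<close>)
  have N1424: "tp (w1 + w4) \<noteq> tp (w2 + w4)"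
    by (rule tp_neq) (use F in \<open>simp_all add: lor_add_left lor_add_right\<close>)
  have N1434: "tp (w1 + w4) \<noteq> tp (w3 + w4)"
    by (rule tp_neq) (use F in \<open>simp_all add: lor_add_left lor_add_right\<close>)
  have N2324: "tp (w2 + w3) \<noteq> tp (w2 + w4)"
    by (rule tp_neq) (use F in \<open>simp_all add: lor_add_left lor_add_right\<close>)
  have N2334: "tp (w2 + w3) \<noteq> tp (w3 + w4)"
    by (rule tp_neq) (use F in \<open>simp_all add: lor_add_left lor_add_right\<close>)
  have N2434: "tp (w2 + w4) \<noteq> tp (w3 + w4)"
    by (rule tp_neq) (use F in \<open>simp_all add: lor_add_left lor_add_right\<close>)
  have dc: "descartes_config (ocof w1, ocof w2, ocof w3, ocof w4)"
    unfolding descartes_config_def Let_def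
    by (simp add: all4 pairs_set V T12 T21 T13 T31 T14 T41 T23 T32 T24 T42 T34 T43
       N1213 N1214 N1223 N1224 N1234 N1314 N1323 N1324 N1334 N1423 N1424 N1434 N2324 N2334 N2434
       N1213[symmetric] N1214[symmetric] N1223[symmetric] N1224[symmetric] N1234[symmetric] N1314[symmetric]
       N1323[symmetric] N1324[symmetric] N1334[symmetric] N1423[symmetric] N1424[symmetric] N1434[symmetric]
       N2324[symmetric] N2334[symmetric] N2434[symmetric])
  note P = prod3[OF rel]
  have "(ointerior (ocof w1) \<inter> ointerior (ocof w2) = {} \<and> ointerior (ocof w1) \<inter> ointerior (ocof w3) = {} \<and> ointerior (ocof w1) \<inter> ointerior (ocof w4) = {} \<and> ointerior (ocof w2) \<inter> ointerior (ocof w1) = {} \<and> ointerior (ocof w2) \<inter> ointerior (ocof w3) = {} \<and> ointerior (ocof w2) \<inter> ointerior (ocof w4) = {} \<and> ointerior (ocof w3) \<inter> ointerior (ocof w1) = {} \<and> ointerior (ocof w3) \<inter> ointerior (ocof w2) = {} \<and> ointerior (ocof w3) \<inter> ointerior (ocof w4) = {} \<and> ointerior (ocof w4) \<inter> ointerior (ocof w1) = {} \<and> ointerior (ocof w4) \<inter> ointerior (ocof w2) = {} \<and> ointerior (ocof w4) \<inter> ointerior (ocof w3) = {}) \<or> (ointerior (reverse_oc (ocof w1)) \<inter> ointerior (reverse_oc (ocof w2)) = {} \<and> ointerior (reverse_oc (ocof w1)) \<inter> ointerior (reverse_oc (ocof w3)) = {} \<and> ointerior (reverse_oc (ocof w1))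 \<inter> ointerior (reverse_oc (ocof w4)) = {} \<and> ointerior (reverse_oc (ocof w2)) \<inter> ointerior (reverse_oc (ocof w1)) = {} \<and> ointerior (reverse_oc (ocof w2)) \<inter> ointerior (reverse_oc (ocof w3)) = {} \<and> ointerior (reverse_oc (ocof w2)) \<inter> ointerior (reverse_oc (ocof w4)) = {} \<and> ointerior (reverse_oc (ocof w3)) \<inter> ointerior (reverse_oc (ocof w1)) = {} \<and> ointerior (reverse_oc (ocof w3)) \<inter> ointerior (reverse_oc (ocof w2)) = {} \<and> ointerior (reverse_oc (ocof w3)) \<inter> ointerior (reverse_oc (ocof w4)) = {} \<and> ointerior (reverse_oc (ocof w4)) \<inter> ointerior (reverse_oc (ocof w1)) = {} \<and> ointerior (reverse_oc (ocof w4)) \<inter> ointerior (reverse_oc (ocof w2)) = {} \<and> ointerior (reverse_oc (ocof w4)) \<inter> ointerior (reverse_oc (ocof w3)) = {})"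
  proof (cases "w1$2 + w2$2 + w3$2 + w4$2 > 0")
    case True
    note O = orient_all[OF G True P]
    show ?thesis unfolding I1 I2 I3 I4 using disj_set[OF O(1)] disj_set[OF O(2)] disj_set[OF O(3)]
      disj_set[OF O(4)] disj_set[OF O(5)] disj_set[OF O(6)] by simp
  next
    case False
    then have s': "(- w1)$2 + (- w2)$2 + (- w3)$2 + (- w4)$2 > 0" using sig by simp
    have G': "gram4 (- w1) (- w2) (- w3) (- w4)" using G gram4_neg by simp
    have P': "((- w1)$2 + (- w2)$2) * ((- w3)$2 + (- w4)$2) \<ge> 0"
       "((- w1)$2 + (- w3)$2) * ((- w2)$2 + (- w4)$2) \<ge> 0"
       "((- w1)$2 + (- w4)$2) * ((- w2)$2 + (- w3)$2) \<ge> 0" using P by (simp_all add: algebra_simps)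
    note O = orient_all[OF G' s' P']
    show ?thesis unfolding I1 I2 I3 I4 using disj_set[OF O(1)] disj_set[OF O(2)] disj_set[OF O(3)]
      disj_set[OF O(4)] disj_set[OF O(5)] disj_set[OF O(6)] by simp
  qed
  then show ?thesis unfolding oriented_descartes_def Let_def using dc by (simp add: all4)
qed

definition agree :: "real^4 \<Rightarrow> real^4 \<Rightarrow> bool" where
  "agree x y \<longleftrightarrow> x$2 = y$2 \<and> x$3 = y$3 \<and> x$4 = y$4"

lemma eq_self:
  assumes "lor x x = 1" "lor y y = 1" "agree x y" "x$2 \<noteq> 0"
  shows "x = y"
proof -
  have "x$1 * x$2 = y$1 * x$2" using assms unfolding lor_def agree_def by (simp add: algebra_simps)
  then have "x$1 = y$1" using assms(4) by simp
  then show ?thesis using assms(3) unfolding agree_def by (simp add: vec_eq_iff forall_4)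
qed

lemma eq_other:
  assumes "agree x y" "x$2 = 0" "z$2 \<noteq> 0" "lor x z = lor y z"
  shows "x = y"
proof -
  have "x$1 * z$2 = y$1 * z$2" using assms unfolding lor_def agree_def by (simp add: algebra_simps)
  then have "x$1 = y$1" using assms(3) by simp
  then show ?thesis using assms(1) unfolding agree_def by (simp add: vec_eq_iff forall_4)
qed

lemma eq_row:
  assumes "lor x x = 1" "lor y y = 1" "agree x y" "z$2 \<noteq> 0" "lor x z = -1" "lor y z = -1"
  shows "x = y"
  using assms eq_self eq_other by (cases "x$2 = 0") auto

lemma uniq4a:
  assumes G: "gram4 a b c d" and G': "gram4 a' b' c' d'"
    and ag: "agree a a'" "agree b b'" "agree c c'" "agree d d'" and nz: "a$2 \<noteq> 0"
  shows "a = a' \<and> b = b' \<and> c = c' \<and> d = d'"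
proof -
  note F = gram4_facts[OF G] and F' = gram4_facts[OF G']
  have aa: "a = a'" using eq_self F(1) F'(1) ag(1) nz by blast
  have "b = b'" by (rule eq_row[of b b' a]) (use F F' ag nz aa in auto)
  moreover have "c = c'" by (rule eq_row[of c c' a]) (use F F' ag nz aa in auto)
  moreover have "d = d'" by (rule eq_row[of d d' a]) (use F F' ag nz aa in auto)
  ultimately show ?thesis using aa by simp
qed

lemma gram4_perm:
  assumes "gram4 a b c d"
  shows "gram4 b a c d" "gram4 c a b d" "gram4 d a b c"
  using gram4_facts[OF assms] unfolding gram4_def by simp_all

lemma uniq4:
  assumes G: "gram4 a b c d" and G': "gram4 a' b' c' d'"
    and ag: "agree a a'" "agree b b'" "agree c c'" "agree d d'"
    and nz: "a$2 \<noteq> 0 \<or> b$2 \<noteq> 0 \<or> c$2 \<noteq> 0 \<or> d$2 \<noteq> 0"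
  shows "a = a' \<and> b = b' \<and> c = c' \<and> d = d'"
  using nz
proof (elim disjE)
  assume "a$2 \<noteq> 0" then show ?thesis using uniq4a[OF G G' ag] by blast
next
  assume "b$2 \<noteq> 0" then show ?thesis using uniq4a[OF gram4_perm(1)[OF G] gram4_perm(1)[OF G'] ag(2,1,3,4)] by blast
next
  assume "c$2 \<noteq> 0" then show ?thesis using uniq4a[OF gram4_perm(2)[OF G] gram4_perm(2)[OF G'] ag(3,1,2,4)] by blast
next
  assume "d$2 \<noteq> 0" then show ?thesis using uniq4a[OF gram4_perm(3)[OF G] gram4_perm(3)[OF G'] ag(4,1,2,3)] by blast
qed

lemma converse:
  fixes M :: "real^3^4"
  assumes c1: "column 1 M \<noteq> 0" and eq: "transpose M ** QD ** M = target3"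
  shows "\<exists>!D. oriented_descartes D \<and> MD D = M"
proof -
  obtain W :: "real^4^4" where WM: "\<And>i j. W $ i $ emb j = M $ i $ j" and WK: "transpose W ** QD ** W = KK"
    using build_W[OF c1 eq] by blast
  have L: "lor (W$i) (W$k) = (if i = k then 1 else -1)" for i k using conv_alg[OF WK] .
  have G: "gram4 (W$1) (W$2) (W$3) (W$4)" unfolding gram4_def using L by simp
  have b: "W$i$2 = M$i$1" for i using WM[of i 1] by (simp add: emb_def)
  have "Bq (column 1 M) (column 1 M) = 0" using eq TQ[of M 1 1] by (simp add: target3_def)
  then have rel: "(W$1$2)^2 + (W$2$2)^2 + (W$3$2)^2 + (W$4$2)^2 = (W$1$2 + W$2$2 + W$3$2 + W$4$2)^2 / 2"
    unfolding b Bq_def column_def by (simp add: power2_eq_square)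
  have nz: "W$1$2 \<noteq> 0 \<or> W$2$2 \<noteq> 0 \<or> W$3$2 \<noteq> 0 \<or> W$4$2 \<noteq> 0"
  proof (rule ccontr)
    assume "\<not> ?thesis"
    then have "M$i$1 = 0" for i using b exhaust_4[of i] by auto
    then have "column 1 M = 0" by (simp add: column_def vec_eq_iff)
    then show False using c1 by simp
  qed
  have sig: "W$1$2 + W$2$2 + W$3$2 + W$4$2 \<noteq> 0"
  proof
    assume s0: "W$1$2 + W$2$2 + W$3$2 + W$4$2 = 0"
    then have "(W$1$2)^2 + (W$2$2)^2 + (W$3$2)^2 + (W$4$2)^2 = 0" using rel by simp
    then have "W$1$2 = 0 \<and> W$2$2 = 0 \<and> W$3$2 = 0 \<and> W$4$2 = 0"
      by (smt (verit) zero_le_power2 power_zero_numeral zero_eq_power2)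
    then show False using nz by simp
  qed
  define D where "D = (ocof (W$1), ocof (W$2), ocof (W$3), ocof (W$4))"
  have od: "oriented_descartes D" unfolding D_def by (rule conv_config[OF G sig rel])
  note F = gram4_facts[OF G]
  have A: "aug (ocof (W$i)) = W$i" for i using ocof_aug_eq L[of i i] by simp
  have md: "MD D = M"
  proof -
    have "MD D $ i $ j = M $ i $ j" for i j
    proof -
      have "MD D $ i = mvec (ocof (W$i))" unfolding D_def using exhaust_4[of i] by auto
      then have "MD D $ i $ j = aug (ocof (W$i)) $ emb j"
        using exhaust_3[of j] by (auto simp: mvec_aug emb_def)
      then show ?thesis using A WM by simp
    qed
    then show ?thesis by (simp add: vec_eq_iff)
  qed
  show ?thesis
  proof (rule ex1I[of _ D])
    show "oriented_descartes D \<and> MD D = M" using od md by simp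
  next
    fix D' assume h: "oriented_descartes D' \<and> MD D' = M"
    obtain C1 C2 C3 C4 where D': "D' = (C1, C2, C3, C4)" by (cases D') auto
    have f: "valid_oc C1 \<and> valid_oc C2 \<and> valid_oc C3 \<and> valid_oc C4 \<and>
      lor (aug C1) (aug C2) = -1 \<and> lor (aug C1) (aug C3) = -1 \<and> lor (aug C1) (aug C4) = -1 \<and>
      lor (aug C2) (aug C3) = -1 \<and> lor (aug C2) (aug C4) = -1 \<and> lor (aug C3) (aug C4) = -1"
      using fwd_config[of C1 C2 C3 C4] h unfolding D' by blast
    have G': "gram4 (aug C1) (aug C2) (aug C3) (aug C4)" unfolding gram4_def using f lor_self by simp
    have ag: "agree (W$i) (Wof D' $ i)" for i
    proof -
      have "Wof D' $ i $ emb j = W $ i $ emb j" for j using Wof_MD[of D' i j] h WM by simp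
      from this[of 1] this[of 2] this[of 3] show ?thesis unfolding agree_def emb_def by simp
    qed
    have rows: "Wof D' $ 1 = aug C1" "Wof D' $ 2 = aug C2" "Wof D' $ 3 = aug C3" "Wof D' $ 4 = aug C4"
      unfolding D' Wof_def by simp_all
    have E: "W$1 = aug C1 \<and> W$2 = aug C2 \<and> W$3 = aug C3 \<and> W$4 = aug C4"
      using uniq4[OF G G' ag[of 1, unfolded rows] ag[of 2, unfolded rows] ag[of 3, unfolded rows] ag[of 4, unfolded rows] nz] .
    have "C1 = ocof (W$1)" "C2 = ocof (W$2)" "C3 = ocof (W$3)" "C4 = ocof (W$4)"
      using E aug_ocof[of C1] aug_ocof[of C2] aug_ocof[of C3] aug_ocof[of C4] f by simp_all
    then show "D' = D" unfolding D' D_def by simp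
  qed
qed

theorem theorem3p1:
  shows "(\<forall>D. oriented_descartes D \<longrightarrow>
            column 1 (MD D) \<noteq> 0 \<and> transpose (MD D) ** QD ** MD D = target3)
       \<and> (\<forall>M :: real ^ 3 ^ 4. column 1 M \<noteq> 0 \<and> transpose M ** QD ** M = target3 \<longrightarrow>
            (\<exists>!D. oriented_descartes D \<and> MD D = M))"
  using forward converse by blast

end
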